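(* Let $A$ be a finite-dimensional commutative algebra over a field of characteristic zero which is associative or alternative, let $\mathrm{Rad}(A)$ be its (Jacobson) radical, and let $R$ be a Rota–Baxter operator of weight zero on $A$. Then (a) $\mathrm{Im}\,R\subseteq \mathrm{Rad}(A)$; (b) if $A$ is unital, then $\mathrm{rb}(A)\le 2m-1$, where $m$ is the nilpotency index of $\mathrm{Rad}(A)$ (the least $m$ with $\mathrm{Rad}(A)^m=0$).
   Context: A linear operator $R$ on $A$ is a Rota–Baxter operator of weight $0$ if $R(x)R(y)=R(R(x)y+xR(y))$ for all $x,y\in A$. For finite-dimensional associative or alternative $A$, $\mathrm{Rad}(A)$ is the largest nilpotent ideal. The RB-index $\mathrm{rb}(A)$ is the least $n\in\mathbb N$ such that $R^n=0$ for every Rota–Baxter operator $R$ of weight zero on $A$ ($\infty$ if no such $n$ exists). *)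

theory Defs
  imports Main "HOL-Library.Extended_Nat"
begin

definition bilinear_mult :: "('k::field \<Rightarrow> 'v::ab_group_add \<Rightarrow> 'v) \<Rightarrow> ('v \<Rightarrow> 'v \<Rightarrow> 'v) \<Rightarrow> bool" where
  "bilinear_mult scale mult \<longleftrightarrow>
     (\<forall>x y z. mult (x + y) z = mult x z + mult y z) \<and>
     (\<forall>x y z. mult x (y + z) = mult x y + mult x z) \<and>
     (\<forall>a x y. mult (scale a x) y = scale a (mult x y)) \<and>
     (\<forall>a x y. mult x (scale a y) = scale a (mult x y))"

definition algebra :: "('k::field \<Rightarrow> 'v::ab_group_add \<Rightarrow> 'v) \<Rightarrow> ('v \<Rightarrow> 'v \<Rightarrow> 'v) \<Rightarrow> bool" where
  "algebra scale mult \<longleftrightarrow> vector_space scale \<and> bilinear_mult scale mult"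

definition finite_dim_algebra :: "('k::field \<Rightarrow> 'v::ab_group_add \<Rightarrow> 'v) \<Rightarrow> ('v \<Rightarrow> 'v \<Rightarrow> 'v) \<Rightarrow> bool" where
  "finite_dim_algebra scale mult \<longleftrightarrow>
     algebra scale mult \<and> (\<exists>B. finite B \<and> module.span scale B = UNIV)"

definition commutative_mult :: "('v \<Rightarrow> 'v \<Rightarrow> 'v) \<Rightarrow> bool" where
  "commutative_mult mult \<longleftrightarrow> (\<forall>x y. mult x y = mult y x)"

definition associative_mult :: "('v \<Rightarrow> 'v \<Rightarrow> 'v) \<Rightarrow> bool" where
  "associative_mult mult \<longleftrightarrow> (\<forall>x y z. mult (mult x y) z = mult x (mult y z))"

definition alternative_mult :: "('v \<Rightarrow> 'v \<Rightarrow> 'v) \<Rightarrow> bool" where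
  "alternative_mult mult \<longleftrightarrow>
     (\<forall>x y. mult (mult x x) y = mult x (mult x y)) \<and>
     (\<forall>x y. mult (mult y x) x = mult y (mult x x))"

definition unital_mult :: "('v \<Rightarrow> 'v \<Rightarrow> 'v) \<Rightarrow> bool" where
  "unital_mult mult \<longleftrightarrow> (\<exists>e. \<forall>x. mult e x = x \<and> mult x e = x)"

definition alg_ideal :: "('k::field \<Rightarrow> 'v::ab_group_add \<Rightarrow> 'v) \<Rightarrow> ('v \<Rightarrow> 'v \<Rightarrow> 'v) \<Rightarrow> 'v set \<Rightarrow> bool" where
  "alg_ideal scale mult I \<longleftrightarrow>
     module.subspace scale I \<and> (\<forall>x\<in>I. \<forall>a. mult a x \<in> I \<and> mult x a \<in> I)"

text \<open>prods mult I n x: x is a product of exactly n (n \<ge> 1) elements of I,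
  in some bracketing.\<close>
inductive prods :: "('v \<Rightarrow> 'v \<Rightarrow> 'v) \<Rightarrow> 'v set \<Rightarrow> nat \<Rightarrow> 'v \<Rightarrow> bool"
  for mult :: "'v \<Rightarrow> 'v \<Rightarrow> 'v" and I :: "'v set" where
  base: "x \<in> I \<Longrightarrow> prods mult I 1 x"
| step: "prods mult I i x \<Longrightarrow> prods mult I j y \<Longrightarrow> prods mult I (i + j) (mult x y)"

text \<open>The power I^n (n \<ge> 1): linear span of all products of n elements of I
  (equivalently I^1 = I, I^n = sum over i+j=n of I^i I^j).\<close>
definition ideal_pow :: "('k::field \<Rightarrow> 'v::ab_group_add \<Rightarrow> 'v) \<Rightarrow> ('v \<Rightarrow> 'v \<Rightarrow> 'v) \<Rightarrow> 'v set \<Rightarrow> nat \<Rightarrow> 'v set" where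
  "ideal_pow scale mult I n = module.span scale {x. prods mult I n x}"

definition nilpotent_ideal :: "('k::field \<Rightarrow> 'v::ab_group_add \<Rightarrow> 'v) \<Rightarrow> ('v \<Rightarrow> 'v \<Rightarrow> 'v) \<Rightarrow> 'v set \<Rightarrow> bool" where
  "nilpotent_ideal scale mult I \<longleftrightarrow>
     alg_ideal scale mult I \<and> (\<exists>n\<ge>1. ideal_pow scale mult I n = {0})"

definition Rad :: "('k::field \<Rightarrow> 'v::ab_group_add \<Rightarrow> 'v) \<Rightarrow> ('v \<Rightarrow> 'v \<Rightarrow> 'v) \<Rightarrow> 'v set" where
  "Rad scale mult = (GREATEST I. nilpotent_ideal scale mult I)"

definition nil_index :: "('k::field \<Rightarrow> 'v::ab_group_add \<Rightarrow> 'v) \<Rightarrow> ('v \<Rightarrow> 'v \<Rightarrow> 'v) \<Rightarrow> 'v set \<Rightarrow> nat" where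
  "nil_index scale mult I = (LEAST m. 1 \<le> m \<and> ideal_pow scale mult I m = {0})"

definition rota_baxter0 :: "('k::field \<Rightarrow> 'v::ab_group_add \<Rightarrow> 'v) \<Rightarrow> ('v \<Rightarrow> 'v \<Rightarrow> 'v) \<Rightarrow> ('v \<Rightarrow> 'v) \<Rightarrow> bool" where
  "rota_baxter0 scale mult R \<longleftrightarrow>
     Vector_Spaces.linear scale scale R \<and>
     (\<forall>x y. mult (R x) (R y) = R (mult (R x) y + mult x (R y)))"

definition rb_index :: "('k::field \<Rightarrow> 'v::ab_group_add \<Rightarrow> 'v) \<Rightarrow> ('v \<Rightarrow> 'v \<Rightarrow> 'v) \<Rightarrow> enat" where
  "rb_index scale mult =
     (if \<exists>n. \<forall>R. rota_baxter0 scale mult R \<longrightarrow> (R ^^ n) = (\<lambda>_. 0)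
      then enat (LEAST n. \<forall>R. rota_baxter0 scale mult R \<longrightarrow> (R ^^ n) = (\<lambda>_. 0))
      else \<infinity>)"

end

theory Submission
  imports Defs
begin


lemma vs_three:
  fixes scale :: "'k::field_char_0 \<Rightarrow> 'v::ab_group_add \<Rightarrow> 'v"
  assumes vs: "vector_space scale" and h: "a + a + a = b + b + (b::'v)"
  shows "a = b"
proof -
  interpret vector_space scale by fact
  have t: "x + x + x = scale 3 x" for x
  proof -
    have "scale 3 x = scale (1+1+1) x" by simp
    also have "\<dots> = x + x + x" by (simp only: scale_left_distrib scale_one)
    finally show ?thesis by simp
  qed
  have "scale 3 a = scale 3 b" using h t by metis
  then have "scale (1/3) (scale 3 a) = scale (1/3) (scale 3 b)" by simp
  then show ?thesis by simp
qed

lemma alt_comm_assoc: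
  fixes scale :: "'k::field_char_0 \<Rightarrow> 'v::ab_group_add \<Rightarrow> 'v"
  assumes vs: "vector_space scale" and bl: "bilinear_mult scale mult"
    and c: "commutative_mult mult" and al: "alternative_mult mult"
  shows "associative_mult mult"
proof -
  have aL: "mult (x + y) z = mult x z + mult y z" and aR: "mult x (y + z) = mult x y + mult x z" for x y z
    using bl unfolding bilinear_mult_def by auto
  have cm: "mult x y = mult y x" for x y using c unfolding commutative_mult_def by auto
  have la: "mult (mult x x) y = mult x (mult x y)" for x y using al unfolding alternative_mult_def by auto
  have lin: "mult (mult x z) y + mult (mult z x) y = mult x (mult z y) + mult z (mult x y)" for x y z
  proof -
    have "mult (mult (x+z) (x+z)) y = mult (x+z) (mult (x+z) y)" by (rule la)
    then have "mult (mult x x) y + mult (mult x z) y + mult (mult z x) y + mult (mult z z) y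
       = mult x (mult x y) + mult x (mult z y) + mult z (mult x y) + mult z (mult z y)"
      by (simp add: aL aR algebra_simps)
    then show ?thesis by (simp add: la algebra_simps)
  qed
  have key: "mult (mult x z) y + mult (mult x z) y = mult (mult z y) x + mult (mult x y) z" for x y z
    using lin[of x z y] by (simp add: cm)
  show ?thesis unfolding associative_mult_def
  proof (intro allI)
    fix x y z
    let ?a = "mult (mult x y) z" and ?b = "mult (mult y z) x" and ?c = "mult (mult z x) y"
    have e1: "mult x z = mult z x" "mult z y = mult y z" "mult y x = mult x y" by (rule cm)+
    have 1: "?c + ?c = ?b + ?a" using key[where x=x and y=y and z=z] unfolding e1 .
    have 2: "?a + ?a = ?c + ?b" using key[where x=y and y=z and z=x] unfolding e1 .
    have 3: "?b + ?b = ?a + ?c" using key[where x=z and y=x and z=y] unfolding e1 .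
    have "?a + ?a + ?a = ?b + ?b + ?b" using 1 2 3
      by (metis add.assoc add.commute add_left_cancel)
    then have "?a = ?b" using vs_three[OF vs] by blast
    then show "mult (mult x y) z = mult x (mult y z)" by (simp add: cm)
  qed
qed


locale ca = finite_dimensional_vector_space scale Basis
  for scale :: "'k::field_char_0 \<Rightarrow> 'v::ab_group_add \<Rightarrow> 'v" and Basis :: "'v set" +
  fixes mult :: "'v \<Rightarrow> 'v \<Rightarrow> 'v"
  assumes addL: "mult (x + y) z = mult x z + mult y z"
  and addR: "mult x (y + z) = mult x y + mult x z"
  and scL: "mult (scale a x) y = scale a (mult x y)"
  and scR: "mult x (scale a y) = scale a (mult x y)"
  and comm: "mult x y = mult y x"
  and assoc: "mult (mult x y) z = mult x (mult y z)"
begin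

lemma mult0L[simp]: "mult 0 x = 0"
  using addL[of 0 0 x] by simp
lemma mult0R[simp]: "mult x 0 = 0"
  using addR[of x 0 0] by simp
lemma negL: "mult (- x) y = - mult x y"
  using addL[of x "-x" y] by (simp add: eq_neg_iff_add_eq_0 add.commute)
lemma negR: "mult x (- y) = - mult x y"
  using addR[of x y "-y"] by (simp add: eq_neg_iff_add_eq_0 add.commute)
lemma diffL: "mult (x - y) z = mult x z - mult y z"
  by (simp only: diff_conv_add_uminus addL negL)
lemma diffR: "mult x (y - z) = mult x y - mult x z"
  by (simp only: diff_conv_add_uminus addR negR)

lemma lc: "mult x (mult y z) = mult y (mult x z)"
  by (metis assoc comm)

abbreviation Lp :: "'v \<Rightarrow> nat \<Rightarrow> 'v \<Rightarrow> 'v" where "Lp r k \<equiv> (mult r ^^ k)"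

lemma Lp_add: "Lp r k (x + y) = Lp r k x + Lp r k y"
  by (induction k) (auto simp: addR)
lemma Lp_scale: "Lp r k (scale c x) = scale c (Lp r k x)"
  by (induction k) (auto simp: scR)
lemma Lp_0[simp]: "Lp r k 0 = 0"
  by (induction k) auto
lemma Lp_diff: "Lp r k (x - y) = Lp r k x - Lp r k y"
  by (induction k) (auto simp: diffR)
lemma Lp_multL: "mult (Lp r k x) y = Lp r k (mult x y)"
  by (induction k) (auto simp: assoc)
lemma Lp_multR: "mult y (Lp r k x) = Lp r k (mult y x)"
  by (induction k) (auto simp: lc)
lemma Lp_Suc': "Lp r (Suc k) x = Lp r k (mult r x)"
  by (simp only: funpow_Suc_right o_apply)
lemma Lp_plus: "Lp r (i + j) x = Lp r i (Lp r j x)"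
  by (simp add: funpow_add)

end


inductive prods2 :: "('v \<Rightarrow> 'v \<Rightarrow> 'v) \<Rightarrow> 'v set \<Rightarrow> 'v set \<Rightarrow> nat \<Rightarrow> nat \<Rightarrow> 'v \<Rightarrow> bool"
  for mult :: "'v \<Rightarrow> 'v \<Rightarrow> 'v" and I :: "'v set" and J :: "'v set" where
  b1: "x \<in> I \<Longrightarrow> prods2 mult I J 1 0 x"
| b2: "x \<in> J \<Longrightarrow> prods2 mult I J 0 1 x"
| st: "prods2 mult I J p q x \<Longrightarrow> prods2 mult I J p' q' y \<Longrightarrow> prods2 mult I J (p + p') (q + q') (mult x y)"

context ca begin

lemma prods_ge1: "prods mult I n x \<Longrightarrow> n \<ge> 1"
  by (induction rule: prods.induct) auto

lemma prods_in: assumes A: "alg_ideal scale mult I" and P: "prods mult I n x" shows "x \<in> I"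
  using P A by (induction rule: prods.induct) (auto simp: alg_ideal_def)

lemma prods_le: assumes A: "alg_ideal scale mult I" and P: "prods mult I n x"
  shows "1 \<le> k \<Longrightarrow> k \<le> n \<Longrightarrow> prods mult I k x"
using P proof (induction arbitrary: k rule: prods.induct)
  case (base x)
  then show ?case using prods.base[of x I mult] by auto
next
  case (step i x j y)
  have i1: "i \<ge> 1" "j \<ge> 1" using step.hyps prods_ge1 by auto
  show ?case
  proof (cases "k = 1")
    case True
    have "mult x y \<in> I" using prods_in[OF A step.hyps(1)] A
      by (auto simp: alg_ideal_def)
    then show ?thesis using True prods.base by metis
  next
    case False
    define k1 where "k1 = min i (k - 1)"
    define k2 where "k2 = k - k1"
    have "k1 \<ge> 1" "k1 \<le> i" "k2 \<ge> 1" "k2 \<le> j" "k = k1 + k2"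
      using i1 False step.prems(1,2) unfolding k1_def k2_def by auto
    then show ?thesis using step.IH prods.step by metis
  qed
qed

lemma ideal_pow_span: "ideal_pow scale mult I n = span {x. prods mult I n x}"
  unfolding ideal_pow_def by simp

lemma pow_zero: "ideal_pow scale mult I n = {0} \<Longrightarrow> prods mult I n x \<Longrightarrow> x = 0"
  unfolding ideal_pow_span using span_base[of x "{x. prods mult I n x}"] by auto

lemma pow_zero_ge: "alg_ideal scale mult I \<Longrightarrow> ideal_pow scale mult I n = {0} \<Longrightarrow> n \<ge> 1
   \<Longrightarrow> prods mult I k x \<Longrightarrow> k \<ge> n \<Longrightarrow> x = 0"
  using pow_zero prods_le by blast

lemma span_sub0: "S \<subseteq> {0} \<Longrightarrow> span S = {0}"
proof -
  assume "S \<subseteq> {0}"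
  then have "span S \<subseteq> span {0}" by (rule span_mono)
  then show ?thesis using span_zero[of S] by auto
qed

lemma pow_zeroI: "(\<And>x. prods mult I n x \<Longrightarrow> x = 0) \<Longrightarrow> ideal_pow scale mult I n = {0}"
  unfolding ideal_pow_span by (rule span_sub0) auto

lemma span_mult:
  assumes "x \<in> span S" "y \<in> span T" "\<And>s t. s \<in> S \<Longrightarrow> t \<in> T \<Longrightarrow> mult s t \<in> span U"
  shows "mult x y \<in> span U"
proof -
  have inner: "mult s y \<in> span U" if "s \<in> S" for s
    using assms(2)
  proof (induction rule: span_induct_alt)
    case base then show ?case by (simp add: span_zero)
  next
    case (step c t z)
    then show ?case using assms(3)[OF that] by (simp add: addR scR span_add span_scale)
  qed
  show ?thesis using assms(1)
  proof (induction rule: span_induct_alt)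
    case base then show ?case by (simp add: span_zero)
  next
    case (step c s z)
    then show ?case using inner by (simp add: addL scL span_add span_scale)
  qed
qed

definition sumset :: "'v set \<Rightarrow> 'v set \<Rightarrow> 'v set" where
  "sumset I J = {x + y | x y. x \<in> I \<and> y \<in> J}"

lemma sumset_ideal:
  assumes "alg_ideal scale mult I" "alg_ideal scale mult J"
  shows "alg_ideal scale mult (sumset I J)"
  unfolding alg_ideal_def
proof (intro conjI ballI allI)
  show "subspace (sumset I J)" unfolding sumset_def
    using assms subspace_sums by (auto simp: alg_ideal_def)
next
  fix x a assume "x \<in> sumset I J"
  then obtain u v where uv: "x = u + v" "u \<in> I" "v \<in> J" unfolding sumset_def by auto
  have "mult a u \<in> I" "mult u a \<in> I" "mult a v \<in> J" "mult v a \<in> J"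
    using assms uv by (auto simp: alg_ideal_def)
  then show "mult a x \<in> sumset I J" "mult x a \<in> sumset I J"
    unfolding sumset_def uv by (auto simp: addL addR)
qed

lemma sumset_sub1: "alg_ideal scale mult J \<Longrightarrow> I \<subseteq> sumset I J"
  unfolding sumset_def alg_ideal_def by (force dest: subspace_0)

lemma sumset_sub2: "alg_ideal scale mult I \<Longrightarrow> J \<subseteq> sumset I J"
  unfolding sumset_def alg_ideal_def by (force dest: subspace_0)

end

context ca begin

definition P2 :: "'v set \<Rightarrow> 'v set \<Rightarrow> nat \<Rightarrow> nat \<Rightarrow> 'v \<Rightarrow> bool" where
  "P2 I J p q x \<longleftrightarrow> (q = 0 \<longrightarrow> prods mult I p x) \<and> (p = 0 \<longrightarrow> prods mult J q x) \<and>
     (p \<noteq> 0 \<longrightarrow> q \<noteq> 0 \<longrightarrow> (\<exists>y z. prods mult I p y \<and> prods mult J q z \<and> x = mult y z))"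

lemma prods2_pq: "prods2 mult I J p q x \<Longrightarrow> p + q \<ge> 1"
  by (induction rule: prods2.induct) auto

lemma prods2_P2: "prods2 mult I J p q x \<Longrightarrow> P2 I J p q x"
proof (induction rule: prods2.induct)
  case (b1 x) then show ?case unfolding P2_def using prods.base[of x I mult] by auto
next
  case (b2 x) then show ?case unfolding P2_def using prods.base[of x J mult] by auto
next
  case (st p q x p' q' y)
  have pq: "p + q \<ge> 1" "p' + q' \<ge> 1" using st.hyps prods2_pq by auto
  consider (I) "q = 0" "p \<noteq> 0" | (J) "p = 0" "q \<noteq> 0" | (M) "p \<noteq> 0" "q \<noteq> 0" using pq by force
  then show ?case
  proof cases
    case I
    then have x: "prods mult I p x" using st.IH(1) unfolding P2_def by auto
    consider (I') "q' = 0" "p' \<noteq> 0" | (J') "p' = 0" "q' \<noteq> 0" | (M') "p' \<noteq> 0" "q' \<noteq> 0" using pq by force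
    then show ?thesis
    proof cases
      case I'
      then have y: "prods mult I p' y" using st.IH(2) unfolding P2_def by auto
      show ?thesis using I I' prods.step[OF x y] unfolding P2_def by auto
    next
      case J'
      then have y: "prods mult J q' y" using st.IH(2) unfolding P2_def by auto
      show ?thesis using I J' x y unfolding P2_def by auto
    next
      case M'
      then obtain y1 z1 where y1: "prods mult I p' y1" "prods mult J q' z1" "y = mult y1 z1"
        using st.IH(2) unfolding P2_def by auto
      have "mult x y = mult (mult x y1) z1" using y1 by (simp add: assoc)
      then show ?thesis using I M' prods.step[OF x y1(1)] y1 unfolding P2_def by auto
    qed
  next
    case J
    then have x: "prods mult J q x" using st.IH(1) unfolding P2_def by auto
    consider (I') "q' = 0" "p' \<noteq> 0" | (J') "p' = 0" "q' \<noteq> 0" | (M') "p' \<noteq> 0" "q' \<noteq> 0" using pq by force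
    then show ?thesis
    proof cases
      case I'
      then have y: "prods mult I p' y" using st.IH(2) unfolding P2_def by auto
      have "mult x y = mult y x" by (rule comm)
      then show ?thesis using J I' x y unfolding P2_def by auto
    next
      case J'
      then have y: "prods mult J q' y" using st.IH(2) unfolding P2_def by auto
      show ?thesis using J J' prods.step[OF x y] unfolding P2_def by auto
    next
      case M'
      then obtain y1 z1 where y1: "prods mult I p' y1" "prods mult J q' z1" "y = mult y1 z1"
        using st.IH(2) unfolding P2_def by auto
      have "mult x y = mult y1 (mult x z1)" using y1 by (simp add: lc)
      then show ?thesis using J M' prods.step[OF x y1(2)] y1 unfolding P2_def by auto
    qed
  next
    case M
    then obtain y0 z0 where x: "prods mult I p y0" "prods mult J q z0" "x = mult y0 z0"
      using st.IH(1) unfolding P2_def by auto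
    consider (I') "q' = 0" "p' \<noteq> 0" | (J') "p' = 0" "q' \<noteq> 0" | (M') "p' \<noteq> 0" "q' \<noteq> 0" using pq by force
    then show ?thesis
    proof cases
      case I'
      then have y: "prods mult I p' y" using st.IH(2) unfolding P2_def by auto
      have "mult x y = mult (mult y0 y) z0" using x by (metis assoc comm)
      then show ?thesis using M I' prods.step[OF x(1) y] x unfolding P2_def by auto
    next
      case J'
      then have y: "prods mult J q' y" using st.IH(2) unfolding P2_def by auto
      have "mult x y = mult y0 (mult z0 y)" using x by (simp add: assoc)
      then show ?thesis using M J' prods.step[OF x(2) y] x unfolding P2_def by auto
    next
      case M'
      then obtain y1 z1 where y1: "prods mult I p' y1" "prods mult J q' z1" "y = mult y1 z1"
        using st.IH(2) unfolding P2_def by auto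
      have "mult x y = mult (mult y0 y1) (mult z0 z1)" using x y1 by (metis assoc comm)
      then show ?thesis using M M' prods.step[OF x(1) y1(1)] prods.step[OF x(2) y1(2)] unfolding P2_def by auto
    qed
  qed
qed

lemma prods_sumset: "prods mult (sumset I J) n u \<Longrightarrow> u \<in> span {x. \<exists>p q. p + q = n \<and> prods2 mult I J p q x}"
proof (induction rule: prods.induct)
  case (base x)
  then obtain a b where ab: "x = a + b" "a \<in> I" "b \<in> J" unfolding sumset_def by auto
  have "a \<in> span {x. \<exists>p q. p + q = 1 \<and> prods2 mult I J p q x}"
    by (rule span_base) (use ab prods2.b1 in force)
  moreover have "b \<in> span {x. \<exists>p q. p + q = 1 \<and> prods2 mult I J p q x}"
    by (rule span_base) (use ab prods2.b2 in force)
  ultimately show ?case using ab span_add by auto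
next
  case (step i x j y)
  show ?case
  proof (rule span_mult[OF step.IH])
    fix s t assume "s \<in> {x. \<exists>p q. p + q = i \<and> prods2 mult I J p q x}" "t \<in> {x. \<exists>p q. p + q = j \<and> prods2 mult I J p q x}"
    then obtain p q p' q' where "p + q = i" "prods2 mult I J p q s" "p' + q' = j" "prods2 mult I J p' q' t" by auto
    then have "prods2 mult I J (p + p') (q + q') (mult s t)" "(p + p') + (q + q') = i + j"
      using prods2.st by auto
    then show "mult s t \<in> span {x. \<exists>p q. p + q = i + j \<and> prods2 mult I J p q x}"
      by (intro span_base) auto
  qed
qed

lemma sumset_nilpotent:
  assumes "nilpotent_ideal scale mult I" "nilpotent_ideal scale mult J"
  shows "nilpotent_ideal scale mult (sumset I J)"
proof -
  obtain P where P: "P \<ge> 1" "ideal_pow scale mult I P = {0}" and AI: "alg_ideal scale mult I"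
    using assms(1) unfolding nilpotent_ideal_def by auto
  obtain Q where Q: "Q \<ge> 1" "ideal_pow scale mult J Q = {0}" and AJ: "alg_ideal scale mult J"
    using assms(2) unfolding nilpotent_ideal_def by auto
  have z: "x = 0" if "prods2 mult I J p q x" "p + q = P + Q - 1" for p q x
  proof -
    have h: "P2 I J p q x" using prods2_P2 that(1) .
    have "p \<ge> P \<or> q \<ge> Q" using that(2) by auto
    then show ?thesis
    proof
      assume pP: "p \<ge> P"
      show ?thesis
      proof (cases "q = 0")
        case True then show ?thesis using h pP pow_zero_ge[OF AI P(2) P(1)] unfolding P2_def by auto
      next
        case False
        then obtain y z where yz: "prods mult I p y" "x = mult y z" using h pP P(1) unfolding P2_def by auto
        then have "y = 0" using pow_zero_ge[OF AI P(2) P(1)] pP by auto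
        then show ?thesis using yz by simp
      qed
    next
      assume qQ: "q \<ge> Q"
      show ?thesis
      proof (cases "p = 0")
        case True then show ?thesis using h qQ pow_zero_ge[OF AJ Q(2) Q(1)] unfolding P2_def by auto
      next
        case False
        then obtain y z where yz: "prods mult J q z" "x = mult y z" using h qQ Q(1) unfolding P2_def by auto
        then have "z = 0" using pow_zero_ge[OF AJ Q(2) Q(1)] qQ by auto
        then show ?thesis using yz by simp
      qed
    qed
  qed
  have "ideal_pow scale mult (sumset I J) (P + Q - 1) = {0}"
  proof (rule pow_zeroI)
    fix u assume "prods mult (sumset I J) (P + Q - 1) u"
    then have "u \<in> span {x. \<exists>p q. p + q = P + Q - 1 \<and> prods2 mult I J p q x}" by (rule prods_sumset)
    also have "\<dots> = {0}" by (rule span_sub0) (use z in auto)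
    finally show "u = 0" by simp
  qed
  then show ?thesis unfolding nilpotent_ideal_def using sumset_ideal[OF AI AJ] P Q
    by (intro conjI exI[of _ "P + Q - 1"]) auto
qed

end

context ca begin

lemma zero_nilpotent: "nilpotent_ideal scale mult {0}"
proof -
  have A: "alg_ideal scale mult {0}" unfolding alg_ideal_def by auto
  have "ideal_pow scale mult {0} 1 = {0}"
    by (rule pow_zeroI) (use prods_in[OF A] in auto)
  then show ?thesis using A unfolding nilpotent_ideal_def by auto
qed

lemma Rad_props:
  shows "nilpotent_ideal scale mult (Rad scale mult)"
    and "\<And>J. nilpotent_ideal scale mult J \<Longrightarrow> J \<subseteq> Rad scale mult"
proof -
  define D where "D = {dim I | I. nilpotent_ideal scale mult I}"
  have fD: "finite D" unfolding D_def
    by (rule finite_subset[of _ "{..dimension}"]) (auto simp: dim_subset_UNIV)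
  have "dim {0} \<in> D" unfolding D_def using zero_nilpotent by auto
  then have "Max D \<in> D" using fD Max_in by auto
  then obtain I0 where I0: "nilpotent_ideal scale mult I0" "dim I0 = Max D" unfolding D_def by auto
  have mx: "J \<subseteq> I0" if J: "nilpotent_ideal scale mult J" for J
  proof -
    let ?K = "sumset I0 J"
    have K: "nilpotent_ideal scale mult ?K" using sumset_nilpotent[OF I0(1) J] .
    have "dim ?K \<in> D" unfolding D_def using K by auto
    then have "dim ?K \<le> dim I0" using I0(2) fD by auto
    moreover have "I0 \<subseteq> ?K" using sumset_sub1 J unfolding nilpotent_ideal_def by auto
    moreover have "subspace I0" "subspace ?K" using I0(1) K unfolding nilpotent_ideal_def alg_ideal_def by auto
    ultimately have "I0 = ?K" using subspace_dim_equal by auto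
    then show ?thesis using sumset_sub2 I0(1) unfolding nilpotent_ideal_def by auto
  qed
  have "Rad scale mult = I0" unfolding Rad_def
    by (rule Greatest_equality) (use I0(1) mx in auto)
  then show "nilpotent_ideal scale mult (Rad scale mult)"
    and "\<And>J. nilpotent_ideal scale mult J \<Longrightarrow> J \<subseteq> Rad scale mult"
    using I0(1) mx by auto
qed

end

context ca begin

lemma rpow_mult: "mult (Lp r a r) (Lp r b r) = Lp r (a + b + 1) r"
proof -
  have "mult (Lp r a r) (Lp r b r) = Lp r a (mult r (Lp r b r))" by (rule Lp_multL)
  also have "mult r (Lp r b r) = Lp r (Suc b) r" by simp
  also have "Lp r a (Lp r (Suc b) r) = Lp r (a + Suc b) r" by (simp only: Lp_plus)
  finally show ?thesis by simp
qed

definition Ir :: "'v \<Rightarrow> 'v set" where "Ir r = {scale c r + mult b r | c b. True}"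

lemma Ir_ideal: "alg_ideal scale mult (Ir r)"
  unfolding alg_ideal_def
proof (intro conjI ballI allI)
  show "subspace (Ir r)" unfolding subspace_def Ir_def
  proof (intro conjI ballI allI)
    show "0 \<in> {scale c r + mult b r | c b. True}" by (rule CollectI, rule exI[of _ 0], rule exI[of _ 0]) simp
  next
    fix x y assume "x \<in> {scale c r + mult b r | c b. True}" "y \<in> {scale c r + mult b r | c b. True}"
    then obtain c b c' b' where "x = scale c r + mult b r" "y = scale c' r + mult b' r" by auto
    then have "x + y = scale (c + c') r + mult (b + b') r" by (simp add: addL scale_left_distrib algebra_simps)
    then show "x + y \<in> {scale c r + mult b r | c b. True}" by auto
  next
    fix d x assume "x \<in> {scale c r + mult b r | c b. True}"
    then obtain c b where "x = scale c r + mult b r" by auto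
    then have "scale d x = scale (d * c) r + mult (scale d b) r" by (simp add: scL scale_right_distrib)
    then show "scale d x \<in> {scale c r + mult b r | c b. True}" by auto
  qed
next
  fix x a assume "x \<in> Ir r"
  then obtain c b where x: "x = scale c r + mult b r" unfolding Ir_def by auto
  define b0 where "b0 = scale c a + mult a b"
  have e: "mult a x = scale 0 r + mult b0 r" unfolding x b0_def
    by (simp add: addR addL scR scL assoc)
  have "scale 0 r + mult b0 r \<in> Ir r" unfolding Ir_def by blast
  then show "mult a x \<in> Ir r" "mult x a \<in> Ir r" using e by (auto simp: comm[of x a])
qed

lemma prods_Ir: "prods mult (Ir r) n u \<Longrightarrow> \<exists>c b. u = scale c (Lp r (n - 1) r) + mult b (Lp r (n - 1) r)"
proof (induction rule: prods.induct)
  case (base x) then show ?case unfolding Ir_def by auto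
next
  case (step i x j y)
  have ij: "i \<ge> 1" "j \<ge> 1" using step.hyps prods_ge1 by auto
  obtain c b where x: "x = scale c (Lp r (i - 1) r) + mult b (Lp r (i - 1) r)" using step.IH by auto
  obtain c' b' where y: "y = scale c' (Lp r (j - 1) r) + mult b' (Lp r (j - 1) r)" using step.IH by auto
  define X where "X = Lp r (i - 1) r"
  define Y where "Y = Lp r (j - 1) r"
  have ar: "i - 1 + (j - 1) + 1 = i + j - 1" using ij by arith
  have XY: "mult X Y = Lp r (i + j - 1) r" unfolding X_def Y_def rpow_mult ar ..
  have "mult x y = scale (c * c') (mult X Y) + mult (scale c b' + scale c' b + mult b b') (mult X Y)"
    unfolding x y X_def[symmetric] Y_def[symmetric]
    by (simp add: addL addR scL scR algebra_simps lc assoc)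
  then show ?case unfolding XY by auto
qed

lemma nilpotent_in_Rad:
  assumes "Lp r k r = 0"
  shows "r \<in> Rad scale mult"
proof -
  have z: "Lp r n r = 0" if "n \<ge> k" for n
  proof -
    have "Lp r n r = Lp r (n - k) (Lp r k r)" using that by (simp add: Lp_plus[symmetric])
    then show ?thesis using assms by simp
  qed
  have "ideal_pow scale mult (Ir r) (k + 1) = {0}"
  proof (rule pow_zeroI)
    fix u assume "prods mult (Ir r) (k + 1) u"
    then obtain c b where "u = scale c (Lp r k r) + mult b (Lp r k r)" using prods_Ir by fastforce
    then show "u = 0" using assms by simp
  qed
  then have "nilpotent_ideal scale mult (Ir r)" unfolding nilpotent_ideal_def using Ir_ideal by auto
  then have "Ir r \<subseteq> Rad scale mult" by (rule Rad_props(2))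
  moreover have "r \<in> Ir r" unfolding Ir_def by (rule CollectI, rule exI[of _ 1], rule exI[of _ 0]) simp
  ultimately show ?thesis by auto
qed

end


lemma nat_dec_stable:
  fixes f :: "nat \<Rightarrow> nat"
  assumes "\<And>k. f (Suc k) \<le> f k"
  shows "\<exists>n. \<forall>k\<ge>n. f k = f n"
proof -
  obtain n where n: "\<forall>y. f n \<le> f y" using ex_has_least_nat[of "\<lambda>_. True" 0 f] by auto
  have "f k \<le> f n" if "k \<ge> n" for k
    using that
  proof (induction k rule: dec_induct)
    case base then show ?case by simp
  next
    case (step k) then show ?case using assms[of k] by simp
  qed
  then show ?thesis using n by (metis order_antisym)
qed

lemma nat_inc_stable:
  fixes g :: "nat \<Rightarrow> nat"
  assumes "\<And>k. g k \<le> g (Suc k)" "\<And>k. g k \<le> B"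
  shows "\<exists>n. \<forall>k\<ge>n. g k = g n"
proof -
  obtain n where n: "\<forall>k\<ge>n. B - g k = B - g n"
    using nat_dec_stable[of "\<lambda>k. B - g k"] assms by (meson diff_le_mono2)
  then show ?thesis using assms(2) by (metis diff_diff_cancel)
qed

locale cab = ca +
  fixes R
  assumes Radd: "R (x + y) = R x + R y"
  and Rsc: "R (scale c x) = scale c (R x)"
  and RB: "mult (R x) (R y) = R (mult (R x) y + mult x (R y))"
begin

lemma R0[simp]: "R 0 = 0"
  using Radd[of 0 0] by simp

lemma M_mult: "u \<in> range R \<Longrightarrow> v \<in> range R \<Longrightarrow> mult u v \<in> range R"
  using RB by auto

lemma M_sub: "subspace (range R)"
  unfolding subspace_def
proof (intro conjI ballI allI)
  show "0 \<in> range R" using R0 by (metis rangeI)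
next
  fix x y assume "x \<in> range R" "y \<in> range R"
  then obtain a b where "x = R a" "y = R b" by auto
  then have "x + y = R (a + b)" by (simp add: Radd)
  then show "x + y \<in> range R" by simp
next
  fix c x assume "x \<in> range R"
  then obtain a where "x = R a" by auto
  then have "scale c x = R (scale c a)" by (simp add: Rsc)
  then show "scale c x \<in> range R" by simp
qed

lemma two: "x + x = scale 2 x"
proof -
  have "scale 2 x = scale (1 + 1) x" by simp
  also have "\<dots> = x + x" by (simp only: scale_left_distrib scale_one)
  finally show ?thesis by simp
qed

lemma idem_zero:
  assumes "e \<in> range R" "mult e e = e"
  shows "e = 0"
proof -
  obtain y where ey: "e = R y" using assms by auto
  define t where "t = R (mult y e)"
  define s where "s = R (mult y t)"
  define q where "q = mult t t"
  have "mult (R y) (R y) = R (mult e y + mult y e)" using RB[of y y] ey by simp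
  moreover have "mult e y + mult y e = scale 2 (mult y e)" by (simp add: comm[of e y] two)
  ultimately have e2: "e = scale 2 t" using assms(2) ey unfolding t_def by (simp add: Rsc)
  have "t = R (mult y e)" by (simp add: t_def)
  also have "\<dots> = R (mult y (scale 2 t))" using e2 by simp
  also have "\<dots> = scale 2 s" unfolding s_def by (simp add: scR Rsc)
  finally have t2: "t = scale 2 s" .
  have "scale 2 t = scale 4 q"
    using assms(2) unfolding e2 q_def by (simp add: scL scR)
  then have "scale 4 s = scale 4 q" unfolding t2 by simp
  then have "scale (1/4) (scale 4 s) = scale (1/4) (scale 4 q)" by simp
  then have qs: "q = s" by simp
  have "mult (R y) (R (mult y e)) = R (mult (R y) (mult y e) + mult y (R (mult y e)))" by (rule RB)
  then have "mult e t = R (mult e (mult y e) + mult y t)" unfolding t_def ey by simp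
  also have "mult e (mult y e) = mult y (mult e e)" by (rule lc)
  also have "\<dots> = mult y e" using assms(2) by simp
  finally have "mult e t = R (mult y e + mult y t)" .
  also have "mult y e + mult y t = scale 3 (mult y t)"
    unfolding e2 by (simp add: scR scale_left_distrib[of 2 1, simplified] )
  finally have "scale 2 q = scale 3 s" unfolding q_def s_def e2 by (simp add: scL Rsc)
  then have "scale 2 s = scale 3 s" unfolding qs .
  then have "scale 3 s - scale 2 s = 0" by simp
  then have "scale (3 - 2) s = 0" by (simp only: scale_left_diff_distrib)
  then have "s = 0" by simp
  then show ?thesis unfolding e2 t2 by simp
qed

end

context cab begin

lemma Lp_M: "r \<in> range R \<Longrightarrow> m \<in> range R \<Longrightarrow> Lp r k m \<in> range R"
  by (induction k) (auto intro: M_mult)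

lemma range_nilpotent:
  assumes rM: "r \<in> range R"
  shows "\<exists>k. Lp r k r = 0"
proof (rule ccontr)
  assume nz: "\<nexists>k. Lp r k r = 0"
  define M where "M = range R"
  define Im where "Im k = Lp r k ` M" for k
  define Ke where "Ke k = {m \<in> M. Lp r k m = 0}" for k
  have rM': "r \<in> M" using rM M_def by simp
  have subM: "subspace M" using M_sub M_def by simp
  have sIm: "subspace (Im k)" for k
    unfolding subspace_def Im_def
  proof (intro conjI ballI allI)
    show "0 \<in> Lp r k ` M" using subspace_0[OF subM] by (metis Lp_0 image_eqI)
  next
    fix x y assume "x \<in> Lp r k ` M" "y \<in> Lp r k ` M"
    then obtain u v where "u \<in> M" "v \<in> M" "x = Lp r k u" "y = Lp r k v" by auto
    then show "x + y \<in> Lp r k ` M" using subspace_add[OF subM] by (metis Lp_add image_eqI)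
  next
    fix c x assume "x \<in> Lp r k ` M"
    then obtain u where "u \<in> M" "x = Lp r k u" by auto
    then show "scale c x \<in> Lp r k ` M" using subspace_scale[OF subM] by (metis Lp_scale image_eqI)
  qed
  have sKe: "subspace (Ke k)" for k
    unfolding subspace_def Ke_def
    using subspace_0[OF subM] subspace_add[OF subM] subspace_scale[OF subM]
    by (auto simp: Lp_add Lp_scale)
  have Im_mono: "Im (Suc k) \<subseteq> Im k" for k
  proof
    fix x assume "x \<in> Im (Suc k)"
    then obtain m where m: "m \<in> M" "x = Lp r (Suc k) m" unfolding Im_def by auto
    then have "x = Lp r k (mult r m)" by (simp only: Lp_Suc')
    moreover have "mult r m \<in> M" using m rM' M_mult M_def by auto
    ultimately show "x \<in> Im k" unfolding Im_def by auto
  qed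
  have Ke_mono: "Ke k \<subseteq> Ke (Suc k)" for k
    unfolding Ke_def by auto
  have d1: "dim (Im (Suc k)) \<le> dim (Im k)" for k by (rule dim_subset[OF Im_mono])
  have d2: "dim (Ke k) \<le> dim (Ke (Suc k))" for k by (rule dim_subset[OF Ke_mono])
  have d3: "dim (Ke k) \<le> dimension" for k by (rule dim_subset_UNIV)
  have "\<exists>n. \<forall>k\<ge>n. dim (Im k) = dim (Im n)" by (rule nat_dec_stable) (rule d1)
  then obtain n1 where n1: "\<forall>k\<ge>n1. dim (Im k) = dim (Im n1)" by blast
  have "\<exists>n. \<forall>k\<ge>n. dim (Ke k) = dim (Ke n)" by (rule nat_inc_stable) (rule d2, rule d3)
  then obtain n2 where n2: "\<forall>k\<ge>n2. dim (Ke k) = dim (Ke n2)" by blast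
  define n where "n = max n1 n2"
  have ImS: "Im (Suc n) = Im n"
    using subspace_dim_equal[OF sIm sIm Im_mono] n1 unfolding n_def
    by (metis le_SucI max.cobounded1 order_refl)
  have KeS: "Ke (Suc n) = Ke n"
    using subspace_dim_equal[OF sKe sKe Ke_mono, of n] n2 unfolding n_def
    by (metis le_SucI max.cobounded2 order_refl)
  define W where "W = Im n"
  have WM: "W \<subseteq> M" unfolding W_def Im_def M_def using Lp_M rM by auto
  have LW: "mult r ` W = W"
  proof -
    have "mult r ` W = Im (Suc n)" unfolding W_def Im_def by (auto simp: image_comp)
    then show ?thesis using ImS W_def by simp
  qed
  have subW: "subspace W" unfolding W_def by (rule sIm)
  have injW: "inj_on (mult r) W"
    unfolding inj_on_def
  proof (intro ballI impI)
    fix x y assume xy: "x \<in> W" "y \<in> W" "mult r x = mult r y"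
    have "x - y \<in> W" using xy subspace_diff[OF subW] by auto
    then obtain m where m: "m \<in> M" "x - y = Lp r n m" unfolding W_def Im_def by auto
    have "Lp r (Suc n) m = mult r (x - y)" using m by simp
    also have "\<dots> = 0" using xy by (simp add: diffR)
    finally have "m \<in> Ke (Suc n)" unfolding Ke_def using m by auto
    then have "m \<in> Ke n" using KeS by simp
    then have "x - y = 0" using m unfolding Ke_def by auto
    then show "x = y" by simp
  qed
  have LkW: "Lp r k ` W = W \<and> inj_on (Lp r k) W" for k
  proof (induction k)
    case 0 then show ?case by simp
  next
    case (Suc k)
    have e: "Lp r (Suc k) = mult r \<circ> Lp r k" by (rule funpow.simps(2))
    have "(mult r \<circ> Lp r k) ` W = mult r ` (Lp r k ` W)" by (rule image_comp[symmetric])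
    also have "\<dots> = W" using Suc LW by simp
    finally have i1: "(mult r \<circ> Lp r k) ` W = W" .
    have "inj_on (mult r) (Lp r k ` W)" using Suc injW by simp
    then have i2: "inj_on (mult r \<circ> Lp r k) W" using Suc comp_inj_on by blast
    show ?case unfolding e using i1 i2 by blast
  qed
  define s where "s = Lp r n r"
  have sW: "s \<in> W" unfolding s_def W_def Im_def using rM' by auto
  have s0: "s \<noteq> 0" using nz s_def by auto
  obtain e where e: "e \<in> W" "Lp r (Suc n) e = s" using LkW[of "Suc n"] sW by (metis imageE)
  have se: "mult s e = s"
  proof -
    have "mult s e = Lp r n (mult r e)" unfolding s_def by (rule Lp_multL)
    also have "\<dots> = Lp r (Suc n) e" by (simp only: Lp_Suc')
    finally show ?thesis using e by simp
  qed
  have Wmult: "mult x y \<in> W" if xyW: "x \<in> W" "y \<in> W" for x y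
  proof -
    obtain m where m: "m \<in> M" "x = Lp r n m" using xyW(1) unfolding W_def Im_def by auto
    have "mult x y = Lp r n (mult m y)" unfolding m by (rule Lp_multL)
    moreover have "mult m y \<in> M" using m WM xyW M_mult M_def by auto
    ultimately show ?thesis unfolding W_def Im_def by auto
  qed
  have "Lp r (Suc n) (mult e e) = mult (Lp r (Suc n) e) e" by (simp only: Lp_multL)
  also have "\<dots> = Lp r (Suc n) e" using e se by simp
  finally have "mult e e = e"
    using LkW[of "Suc n"] Wmult[OF e(1) e(1)] e(1) unfolding inj_on_def by blast
  moreover have "e \<in> range R" using e WM M_def by auto
  ultimately have "e = 0" using idem_zero by blast
  then show False using e s0 by simp
qed

lemma range_Rad: "range R \<subseteq> Rad scale mult"
  using range_nilpotent nilpotent_in_Rad by blast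

end

context cab begin

lemma Rdiff: "R (x - y) = R x - R y"
  by (metis Radd add_diff_cancel eq_diff_eq)

lemma Rk_diff: "(R ^^ k) (x - y) = (R ^^ k) x - (R ^^ k) y"
  by (induction k) (auto simp: Rdiff)

lemma Rk_sc: "(R ^^ k) (scale c x) = scale c ((R ^^ k) x)"
  by (induction k) (auto simp: Rsc)

lemma part_b:
  assumes u: "\<forall>x. mult e1 x = x \<and> mult x e1 = x"
    and m1: "m \<ge> 1" and Nm: "ideal_pow scale mult (Rad scale mult) m = {0}"
  shows "(R ^^ (2 * m - 1)) x = 0"
proof -
  define N where "N = Rad scale mult"
  define a where "a = R e1"
  have aN: "a \<in> N" using range_Rad a_def N_def by auto
  have AN: "alg_ideal scale mult N" using Rad_props(1) N_def unfolding nilpotent_ideal_def by auto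
  have Nm': "ideal_pow scale mult N m = {0}" using Nm N_def by simp
  have F1: "prods mult N (i + 1) (Lp a i v)" if "v \<in> N" for i v
  proof (induction i)
    case 0 then show ?case using that prods.base[of v N mult] by simp
  next
    case (Suc i)
    have "prods mult N (1 + (i + 1)) (mult a (Lp a i v))"
      by (rule prods.step[OF prods.base[OF aN] Suc])
    then show ?case by simp
  qed
  have F2: "Lp a i v = 0" if "v \<in> N" "i + 1 \<ge> m" for i v
    using pow_zero_ge[OF AN Nm' m1 F1[OF that(1)] that(2)] .
  have F3: "Lp a i y = 0" if im: "i \<ge> m" for i y
  proof -
    obtain i' where i': "i = Suc i'" using im m1 by (cases i) auto
    have "Lp a i y = Lp a i' (mult a y)" unfolding i' by (rule Lp_Suc')
    moreover have "mult a y \<in> N" using AN aN unfolding alg_ideal_def by auto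
    ultimately show ?thesis using F2 im i' by auto
  qed
  have Id1: "R (R x) = mult a (R x) - R (mult a x)" for x
  proof -
    have "mult (R x) (R e1) = R (mult (R x) e1 + mult x (R e1))" by (rule RB)
    then have "mult (R x) a = R (R x) + R (mult x a)" using u unfolding a_def by (simp add: Radd)
    then show ?thesis by (simp add: comm[of "R x" a] comm[of x a] eq_diff_eq)
  qed
  have Id2: "scale (of_nat (Suc n)) ((R ^^ Suc (Suc n)) x) = mult a ((R ^^ Suc n) x) - (R ^^ Suc n) (mult a x)" for n x
  proof (induction n arbitrary: x)
    case 0 then show ?case using Id1 by simp
  next
    case (Suc n)
    define Y where "Y = (R ^^ Suc (Suc (Suc n))) x"
    define z where "z = (R ^^ Suc n) x"
    have "scale (of_nat (Suc n)) Y = R (scale (of_nat (Suc n)) ((R ^^ Suc (Suc n)) x))"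
      unfolding Y_def by (simp add: Rsc)
    also have "\<dots> = R (mult a z) - (R ^^ Suc (Suc n)) (mult a x)"
      unfolding Suc z_def by (simp add: Rdiff)
    also have "R (mult a z) = mult a (R z) - R (R z)" using Id1[of z] by (simp add: algebra_simps)
    finally have "scale (of_nat (Suc n)) Y = mult a ((R ^^ Suc (Suc n)) x) - Y - (R ^^ Suc (Suc n)) (mult a x)"
      unfolding z_def Y_def by simp
    then have "scale (of_nat (Suc n)) Y + Y = mult a ((R ^^ Suc (Suc n)) x) - (R ^^ Suc (Suc n)) (mult a x)"
      by (simp add: algebra_simps)
    moreover have "scale (of_nat (Suc (Suc n))) Y = scale (of_nat (Suc n)) Y + Y"
    proof -
      have "scale (of_nat (Suc (Suc n))) Y = scale (1 + of_nat (Suc n)) Y" by (simp only: of_nat_Suc[of "Suc n"])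
      also have "\<dots> = Y + scale (of_nat (Suc n)) Y" by (simp only: scale_left_distrib scale_one)
      finally show ?thesis by (simp add: add.commute)
    qed
    ultimately show ?case unfolding Y_def by simp
  qed
  have Z: "\<forall>i j x. i + j + Suc n \<ge> 2 * m - 1 \<longrightarrow> Lp a i ((R ^^ Suc n) (Lp a j x)) = 0" for n
  proof (induction n)
    case 0
    show ?case
    proof (intro allI impI)
      fix i j x assume h: "i + j + Suc 0 \<ge> 2 * m - 1"
      show "Lp a i ((R ^^ Suc 0) (Lp a j x)) = 0"
      proof (cases "i \<ge> m")
        case True then show ?thesis using F3 by simp
      next
        case False
        show ?thesis
        proof (cases "j \<ge> m")
          case True then show ?thesis using F3 by simp
        next
          case False
          then have "i + 1 \<ge> m" using h \<open>\<not> i \<ge> m\<close> by arith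
          moreover have "R (Lp a j x) \<in> N" using range_Rad N_def by auto
          ultimately show ?thesis using F2 by simp
        qed
      qed
    qed
  next
    case (Suc n)
    show ?case
    proof (intro allI impI)
      fix i j x assume h: "i + j + Suc (Suc n) \<ge> 2 * m - 1"
      define y where "y = Lp a j x"
      have "scale (of_nat (Suc n)) (Lp a i ((R ^^ Suc (Suc n)) y)) =
            Lp a i (mult a ((R ^^ Suc n) y) - (R ^^ Suc n) (mult a y))"
        by (simp only: Lp_scale[symmetric] Id2)
      also have "\<dots> = Lp a (Suc i) ((R ^^ Suc n) y) - Lp a i ((R ^^ Suc n) (Lp a (Suc j) x))"
      proof -
        have e1: "Lp a (Suc j) x = mult a (Lp a j x)" by simp
        show ?thesis unfolding y_def by (simp only: Lp_diff Lp_Suc'[where k=i] e1)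
      qed
      also have "\<dots> = 0"
      proof -
        have z1: "Lp a (Suc i) ((R ^^ Suc n) (Lp a j x)) = 0"
          using Suc.IH[rule_format, of "Suc i" j x] h by simp
        have z2: "Lp a i ((R ^^ Suc n) (Lp a (Suc j) x)) = 0"
          using Suc.IH[rule_format, of i "Suc j" x] h by simp
        show ?thesis unfolding y_def z1 z2 by simp
      qed
      finally have "scale (of_nat (Suc n)) (Lp a i ((R ^^ Suc (Suc n)) y)) = 0" .
      then show "Lp a i ((R ^^ Suc (Suc n)) (Lp a j x)) = 0" unfolding y_def by (simp del: of_nat_Suc)
    qed
  qed
  obtain n where n: "2 * m - 1 = Suc n" using m1 by (cases "2 * m - 1") auto
  have "Lp a 0 ((R ^^ Suc n) (Lp a 0 x)) = 0" using Z[of n, rule_format, of 0 0 x] n by simp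
  then show ?thesis using n by simp
qed

end


theorem theorem13:
  fixes scale :: "'k::field_char_0 \<Rightarrow> 'v::ab_group_add \<Rightarrow> 'v"
    and mult :: "'v \<Rightarrow> 'v \<Rightarrow> 'v"
    and R :: "'v \<Rightarrow> 'v"
  assumes "finite_dim_algebra scale mult"
    and "commutative_mult mult"
    and "associative_mult mult \<or> alternative_mult mult"
    and "rota_baxter0 scale mult R"
  shows "range R \<subseteq> Rad scale mult \<and>
         (unital_mult mult \<longrightarrow>
           rb_index scale mult \<le> enat (2 * nil_index scale mult (Rad scale mult) - 1))"
proof -
  have vs: "vector_space scale" and bl: "bilinear_mult scale mult"
    and fin: "\<exists>B. finite B \<and> module.span scale B = UNIV"
    using assms(1) unfolding finite_dim_algebra_def algebra_def by auto
  interpret vector_space scale by (rule vs)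
  obtain B0 where B0: "finite B0" "span B0 = UNIV" using fin by auto
  obtain Bs where Bs: "independent Bs" "UNIV \<subseteq> span Bs" using basis_exists[of UNIV] by metis
  have fBs: "finite Bs" using independent_span_bound[OF B0(1) Bs(1)] B0(2) by auto
  have asc: "associative_mult mult"
    using assms(3) alt_comm_assoc[OF vs bl assms(2)] by auto
  have cab: "cab scale Bs mult R'" if "rota_baxter0 scale mult R'" for R'
  proof -
    have lin: "Vector_Spaces.linear scale scale R'" and rb: "\<forall>x y. mult (R' x) (R' y) = R' (mult (R' x) y + mult x (R' y))"
      using that unfolding rota_baxter0_def by auto
    show ?thesis
      apply (unfold_locales)
      using fBs Bs bl assms(2) asc lin rb
      unfolding bilinear_mult_def commutative_mult_def associative_mult_def Vector_Spaces.linear_iff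
      by auto
  qed
  interpret C: cab scale Bs mult R using cab[OF assms(4)] .
  have a: "range R \<subseteq> Rad scale mult" by (rule C.range_Rad)
  have b: "rb_index scale mult \<le> enat (2 * nil_index scale mult (Rad scale mult) - 1)"
    if un: "unital_mult mult"
  proof -
    obtain e1 where e1: "\<forall>x. mult e1 x = x \<and> mult x e1 = x" using un unfolding unital_mult_def by auto
    define m where "m = nil_index scale mult (Rad scale mult)"
    have ex: "\<exists>m. 1 \<le> m \<and> ideal_pow scale mult (Rad scale mult) m = {0}"
      using C.Rad_props(1) unfolding nilpotent_ideal_def by auto
    have mp: "1 \<le> m \<and> ideal_pow scale mult (Rad scale mult) m = {0}"
      unfolding m_def nil_index_def by (rule LeastI_ex[OF ex])
    have P: "\<forall>R'. rota_baxter0 scale mult R' \<longrightarrow> (R' ^^ (2 * m - 1)) = (\<lambda>_. 0)"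
    proof (intro allI impI ext)
      fix R' x assume "rota_baxter0 scale mult R'"
      then interpret D: cab scale Bs mult R' by (rule cab)
      show "(R' ^^ (2 * m - 1)) x = 0" using D.part_b[OF e1] mp by blast
    qed
    then have "rb_index scale mult = enat (LEAST n. \<forall>R. rota_baxter0 scale mult R \<longrightarrow> (R ^^ n) = (\<lambda>_. 0))"
      unfolding rb_index_def by auto
    also have "\<dots> \<le> enat (2 * m - 1)" using Least_le[of _ "2 * m - 1"] P by simp
    finally show ?thesis unfolding m_def .
  qed
  show ?thesis using a b by auto
qed


end
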